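(* Consider the model below with $\min\{M,M_f,N\}<1$ and $\epsilon_2\ge0$, fix all parameters other than $\epsilon_1$, and let $\delta:=(M-1)(1-M_f\beta)+\lambda\sigma N$. (i) There exists $\bar{\epsilon}_{BR,RPE}\in[-\infty,\infty)$, depending only on the model parameters, such that a bounded-rationality restricted-perceptions equilibrium (BR-RPE) exists if and only if $\epsilon_1\ge\bar{\epsilon}_{BR,RPE}$. (ii) If $\delta<0$, then $\bar{\epsilon}_{BR,RPE}=-\infty$. (iii) Let $\bar{\epsilon}_{BR}\in[-\infty,\infty)$ be the number such that a bounded-rationality equilibrium (BRE) exists if and only if $\epsilon_1\ge\bar{\epsilon}_{BR}$. If either ($\delta\ge0$ and $p+q\ge1$) or $\delta<0$, then $\bar{\epsilon}_{BR}\ge\bar{\epsilon}_{BR,RPE}$.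
   Context: Parameters: $0<\beta<1$, $\sigma,\lambda,\mu>0$, $\psi>1$, $M,M_f,N\in(0,1]$, $p,q\in(0,1]$ with $(p,q)\neq(1,1)$. The shock $\epsilon_t$ is a two-state Markov chain on $\{\epsilon_1,\epsilon_2\}$ with $\Pr(\epsilon_{t+1}=\epsilon_1\mid\epsilon_t=\epsilon_1)=p$, $\Pr(\epsilon_{t+1}=\epsilon_2\mid\epsilon_t=\epsilon_2)=q$; $\bar q:=(1-p)/(2-p-q)$. Model: $x_t=M\hat E_t x_{t+1}-\sigma(i_t-N\hat E_t\pi_{t+1})+\epsilon_t$, $\pi_t=\lambda x_t+M_f\beta\hat E_t\pi_{t+1}$, $i_t=\max\{\psi\pi_t,-\mu\}$. Say $Y_j=(x_j,\pi_j)$, $j=1,2$, solves the model given forecasts $Y^e_j=(x^e_j,\pi^e_j)$ if for $j=1,2$, with $i_j=\max\{\psi\pi_j,-\mu\}$: $x_j=Mx^e_j-\sigma(i_j-N\pi^e_j)+\epsilon_j$ and $\pi_j=\lambda x_j+M_f\beta\pi^e_j$. A BRE is $(Y_1,Y_2)$ solving the model given $Y^e_1=pY_1+(1-p)Y_2$, $Y^e_2=(1-q)Y_1+qY_2$. A BR-RPE is $(Y_1,Y_2)$ solving the model given $Y^e_1=Y^e_2=\bar qY_2+(1-\bar q)Y_1$. *)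

theory Defs
  imports Complex_Main "HOL-Library.Extended_Real"
begin

definition solves_state ::
  "real \<Rightarrow> real \<Rightarrow> real \<Rightarrow> real \<Rightarrow> real \<Rightarrow> real \<Rightarrow> real \<Rightarrow> real \<Rightarrow>
   real \<Rightarrow> real \<Rightarrow> real \<Rightarrow> real \<Rightarrow> real \<Rightarrow> bool" where
  "solves_state bet sig lam mu psi M Mf N eps x infl xe pe \<longleftrightarrow>
     (let i = max (psi * infl) (- mu) in
        x = M * xe - sig * (i - N * pe) + eps \<and> infl = lam * x + Mf * bet * pe)"

definition BRE_exists ::
  "real \<Rightarrow> real \<Rightarrow> real \<Rightarrow> real \<Rightarrow> real \<Rightarrow> real \<Rightarrow> real \<Rightarrow> real \<Rightarrow>
   real \<Rightarrow> real \<Rightarrow> real \<Rightarrow> real \<Rightarrow> bool" where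
  "BRE_exists bet sig lam mu psi M Mf N p q eps1 eps2 \<longleftrightarrow>
     (\<exists>x1 infl1 x2 infl2.
        solves_state bet sig lam mu psi M Mf N eps1 x1 infl1
          (p * x1 + (1 - p) * x2) (p * infl1 + (1 - p) * infl2) \<and>
        solves_state bet sig lam mu psi M Mf N eps2 x2 infl2
          ((1 - q) * x1 + q * x2) ((1 - q) * infl1 + q * infl2))"

definition BRRPE_exists ::
  "real \<Rightarrow> real \<Rightarrow> real \<Rightarrow> real \<Rightarrow> real \<Rightarrow> real \<Rightarrow> real \<Rightarrow> real \<Rightarrow>
   real \<Rightarrow> real \<Rightarrow> real \<Rightarrow> real \<Rightarrow> bool" where
  "BRRPE_exists bet sig lam mu psi M Mf N p q eps1 eps2 \<longleftrightarrow>
     (let qb = (1 - p) / (2 - p - q) in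
      \<exists>x1 infl1 x2 infl2.
        solves_state bet sig lam mu psi M Mf N eps1 x1 infl1
          (qb * x2 + (1 - qb) * x1) (qb * infl2 + (1 - qb) * infl1) \<and>
        solves_state bet sig lam mu psi M Mf N eps2 x2 infl2
          (qb * x2 + (1 - qb) * x1) (qb * infl2 + (1 - qb) * infl1))"

end

theory Submission
  imports Defs
begin


definition ff :: "real \<Rightarrow> real \<Rightarrow> real \<Rightarrow> real" where
  "ff A B y = max (A*y) (-B)"
definition hh :: "real \<Rightarrow> real \<Rightarrow> real \<Rightarrow> real \<Rightarrow> real" where
  "hh L A B y = L*y + ff A B y"
definition hinv :: "real \<Rightarrow> real \<Rightarrow> real \<Rightarrow> real \<Rightarrow> real" where
  "hinv L A B z = min (z/(L+A)) ((z+B)/L)"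
definition ll :: "real \<Rightarrow> real \<Rightarrow> real \<Rightarrow> real \<Rightarrow> real" where
  "ll A B d y = ff A B y - d*y"

lemma hinv_hh:
  assumes "L > 0" "A > 0" "B > 0"
  shows "hinv L A B (hh L A B y) = y"
proof (cases "A*y \<ge> -B")
  case True
  then have "hh L A B y = (L+A)*y" by (simp add: hh_def ff_def algebra_simps)
  moreover have "((L+A)*y + B)/L \<ge> y" using True assms by (simp add: field_simps)
  ultimately show ?thesis using assms by (simp add: hinv_def)
next
  case False
  then have "hh L A B y = L*y - B" by (simp add: hh_def ff_def algebra_simps)
  moreover have "(L*y - B)/(L+A) \<ge> y" using False assms by (simp add: field_simps)
  ultimately show ?thesis using assms by (simp add: hinv_def)
qed

lemma hh_hinv:
  assumes "L > 0" "A > 0" "B > 0"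
  shows "hh L A B (hinv L A B z) = z"
proof (cases "z/(L+A) \<le> (z+B)/L")
  case True
  then have "z*L \<le> (z+B)*(L+A)" using assms by (simp add: field_simps)
  then have "A*(z/(L+A)) \<ge> -B" using assms by (simp add: field_simps)
  then have "hh L A B (z/(L+A)) = L*(z/(L+A)) + A*(z/(L+A))" by (simp add: hh_def ff_def)
  also have "\<dots> = (L+A)*(z/(L+A))" by (simp only: distrib_right)
  also have "\<dots> = z" using assms by simp
  finally show ?thesis using True by (simp add: hinv_def)
next
  case False
  then have "z*L > (z+B)*(L+A)" using assms by (simp add: field_simps)
  then have "A*((z+B)/L) \<le> -B" using assms by (simp add: field_simps)
  then show ?thesis using False assms by (simp add: hinv_def hh_def ff_def field_simps)
qed

lemma hh_mono:
  assumes "L > 0" "A > 0" "y \<le> y'"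
  shows "hh L A B y \<le> hh L A B y'"
  using assms unfolding hh_def ff_def
  by (smt (verit) mult_left_mono)

lemma hinv_mono:
  assumes "L > 0" "A > 0" "B > 0" "z \<le> z'"
  shows "hinv L A B z \<le> hinv L A B z'"
proof -
  have "z/(L+A) \<le> z'/(L+A)" "(z+B)/L \<le> (z'+B)/L" using assms by (auto simp: divide_right_mono)
  then show ?thesis unfolding hinv_def by linarith
qed

lemma hinv_le: "hinv L A B z \<le> z/(L+A)" by (simp add: hinv_def)

lemma hinv_lip:
  assumes "L > 0" "A > 0" "B > 0" "z \<le> z'"
  shows "hinv L A B z' - hinv L A B z \<le> (z'-z)/L"
proof -
  have a: "z/(L+A) - z'/(L+A) \<ge> -(z'-z)/L"
  proof -
    have "(z'-z)/(L+A) \<le> (z'-z)/L" using assms by (intro divide_left_mono) auto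
    then show ?thesis by (simp add: diff_divide_distrib)
  qed
  have b: "(z+B)/L - (z'+B)/L = -(z'-z)/L" using assms by (simp add: field_simps)
  show ?thesis unfolding hinv_def using a b by linarith
qed

lemma hinv_nonneg:
  assumes "L > 0" "A > 0" "B > 0" "z \<ge> 0"
  shows "hinv L A B z \<ge> 0"
  using assms by (simp add: hinv_def)

lemma hinv_left:
  assumes "L > 0" "A > 0" "B > 0" "z \<le> -B*(L+A)/A"
  shows "hinv L A B z = (z+B)/L"
proof -
  have "z*A \<le> -B*(L+A)" using assms by (simp add: field_simps)
  then have "(z+B)*(L+A) \<le> z*L" by (simp add: algebra_simps)
  then have "(z+B)/L \<le> z/(L+A)" using assms by (simp add: field_simps)
  then show ?thesis by (simp add: hinv_def)
qed

lemma hinv_right: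
  assumes "L > 0" "A > 0" "B > 0" "z \<ge> -B*(L+A)/A"
  shows "hinv L A B z = z/(L+A)"
proof -
  have "z*A \<ge> -B*(L+A)" using assms by (simp add: field_simps)
  then have "(z+B)*(L+A) \<ge> z*L" by (simp add: algebra_simps)
  then have "(z+B)/L \<ge> z/(L+A)" using assms by (simp add: field_simps)
  then show ?thesis by (simp add: hinv_def)
qed

lemma cont_hinv [continuous_intros]:
  "L > 0 \<Longrightarrow> A > 0 \<Longrightarrow> continuous_on S g \<Longrightarrow> continuous_on S (\<lambda>x. hinv L A B (g x))"
  unfolding hinv_def by (intro continuous_intros) auto

lemma cont_ll [continuous_intros]:
  "continuous_on S g \<Longrightarrow> continuous_on S (\<lambda>x. ll A B d (g x))"
  unfolding ll_def ff_def by (intro continuous_intros) 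

lemma cont_hh [continuous_intros]:
  "continuous_on S g \<Longrightarrow> continuous_on S (\<lambda>x. hh L A B (g x))"
  unfolding hh_def ff_def by (intro continuous_intros) 

definition Phi :: "real \<Rightarrow> real \<Rightarrow> real \<Rightarrow> real \<Rightarrow> real \<Rightarrow> real \<Rightarrow> real \<Rightarrow> real \<Rightarrow> real \<Rightarrow> real" where
  "Phi L A B g w1 w2 e1 e2 t = w1 * hinv L A B (e1 + g*t) + w2 * hinv L A B (e2 + g*t) - t"

lemma wdiv: "w1*(a/D) + w2*(b/D) = (w1*a + w2*(b::real))/D"
  by (simp add: add_divide_distrib)

lemma lin_max:
  fixes al ka a b t :: real
  assumes "a \<le> t" "t \<le> b"
  shows "al + ka*t \<le> max (al + ka*a) (al + ka*b)"
proof (cases "ka \<ge> 0")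
  case True then have "ka*t \<le> ka*b" using assms by (intro mult_left_mono) auto
  then show ?thesis by simp
next
  case False then have "ka*t \<le> ka*a" using assms by (intro mult_left_mono_neg) auto
  then show ?thesis by simp
qed

context
  fixes L A B g w1 w2 :: real
  assumes L: "L > 0" and AA: "A > 0" and BB: "B > 0" and g: "g > 0"
    and w: "w1 \<ge> 0" "w2 \<ge> 0" "w1 + w2 = 1"
begin

lemma w2': "w2 = 1 - w1" using w by simp

lemma Phi_neg:
  assumes "g < L + A"
  shows "\<exists>t \<ge> t0. Phi L A B g w1 w2 e1 e2 t \<le> 0"
proof -
  define c where "c = 1 - g/(L+A)"
  have c: "c > 0" using assms L AA by (simp add: c_def field_simps)
  define K where "K = (w1*e1 + w2*e2)/(L+A)"
  define t where "t = max t0 (K/c)"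
  have "Phi L A B g w1 w2 e1 e2 t \<le> w1*((e1+g*t)/(L+A)) + w2*((e2+g*t)/(L+A)) - t"
    unfolding Phi_def using w by (intro diff_right_mono add_mono mult_left_mono hinv_le) auto
  also have "\<dots> = K - c*t"
  proof -
    have e: "w1*(e1+g*t) + w2*(e2+g*t) = (w1*e1+w2*e2) + g*t" by (simp add: algebra_simps w2')
    have "w1*((e1+g*t)/(L+A)) + w2*((e2+g*t)/(L+A)) = (w1*(e1+g*t) + w2*(e2+g*t))/(L+A)"
      by (rule wdiv)
    also have "\<dots> = K + g*t/(L+A)" unfolding e K_def by (simp add: add_divide_distrib)
    finally show ?thesis by (simp add: c_def algebra_simps)
  qed
  also have "\<dots> \<le> 0"
  proof -
    have "K/c \<le> t" by (simp add: t_def)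
    then have "K \<le> c*t" using c by (simp add: field_simps)
    then show ?thesis by simp
  qed
  finally show ?thesis by (intro exI[of _ t]) (simp add: t_def)
qed

lemma Phi_cont: "continuous_on S (Phi L A B g w1 w2 e1 e2)"
  unfolding Phi_def using L AA by (intro continuous_intros) auto

lemma Phi_zero:
  assumes "g < L + A" "Phi L A B g w1 w2 e1 e2 t0 \<ge> 0"
  shows "\<exists>t. Phi L A B g w1 w2 e1 e2 t = 0"
proof -
  obtain t1 where t1: "t1 \<ge> t0" "Phi L A B g w1 w2 e1 e2 t1 \<le> 0" using Phi_neg assms by blast
  show ?thesis using IVT2'[of "Phi L A B g w1 w2 e1 e2" t1 0 t0, OF t1(2) assms(2) t1(1) Phi_cont] by blast
qed

lemma Phi_pos:
  assumes "g < L"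
  shows "\<exists>t. Phi L A B g w1 w2 e1 e2 t \<ge> 0"
proof -
  define z0 where "z0 = -B*(L+A)/A"
  define c where "c = 1 - g/L"
  have c: "c > 0" using assms L by (simp add: c_def field_simps)
  define K where "K = (w1*e1 + w2*e2 + B)/L"
  define t where "t = min (K/c) (min ((z0-e1)/g) ((z0-e2)/g))"
  have "e1 + g*t \<le> z0" "e2 + g*t \<le> z0"
  proof -
    have "t \<le> (z0-e1)/g" "t \<le> (z0-e2)/g" by (auto simp: t_def)
    then show "e1 + g*t \<le> z0" "e2 + g*t \<le> z0" using g by (auto simp: field_simps)
  qed
  then have "Phi L A B g w1 w2 e1 e2 t = w1*((e1+g*t+B)/L) + w2*((e2+g*t+B)/L) - t"
    unfolding Phi_def using hinv_left[OF L AA BB] z0_def by simp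
  also have "\<dots> = K - c*t" using w L by (simp add: K_def c_def field_simps w2')
  also have "\<dots> \<ge> 0"
  proof -
    have "t \<le> K/c" by (simp add: t_def)
    then have "c*t \<le> K" using c by (simp add: field_simps)
    then show ?thesis by simp
  qed
  finally show ?thesis by blast
qed

lemma Phi_left:
  assumes "e1 + g*t \<le> -B*(L+A)/A" "e2 + g*t \<le> -B*(L+A)/A"
  shows "Phi L A B g w1 w2 e1 e2 t = (w1*e1 + w2*e2 + B)/L + (g/L - 1)*t"
proof -
  have "Phi L A B g w1 w2 e1 e2 t = w1*((e1+g*t+B)/L) + w2*((e2+g*t+B)/L) - t"
    unfolding Phi_def using hinv_left[OF L AA BB] assms by simp
  also have "\<dots> = (w1*(e1+g*t+B) + w2*(e2+g*t+B))/L - t" by (simp only: wdiv)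
  also have "w1*(e1+g*t+B) + w2*(e2+g*t+B) = (w1*e1 + w2*e2 + B) + g*t" by (simp add: algebra_simps w2')
  finally show ?thesis by (simp add: add_divide_distrib algebra_simps)
qed

lemma Phi_right:
  assumes "e1 + g*t \<ge> -B*(L+A)/A" "e2 + g*t \<ge> -B*(L+A)/A"
  shows "Phi L A B g w1 w2 e1 e2 t = (w1*e1 + w2*e2)/(L+A) + (g/(L+A) - 1)*t"
proof -
  have "Phi L A B g w1 w2 e1 e2 t = w1*((e1+g*t)/(L+A)) + w2*((e2+g*t)/(L+A)) - t"
    unfolding Phi_def using hinv_right[OF L AA BB] assms by simp
  also have "\<dots> = (w1*(e1+g*t) + w2*(e2+g*t))/(L+A) - t" by (simp only: wdiv)
  also have "w1*(e1+g*t) + w2*(e2+g*t) = (w1*e1 + w2*e2) + g*t" by (simp add: algebra_simps w2')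
  finally show ?thesis by (simp add: add_divide_distrib algebra_simps)
qed

lemma Phi_mid:
  assumes "e1 + g*t \<le> -B*(L+A)/A" "e2 + g*t \<ge> -B*(L+A)/A"
  shows "Phi L A B g w1 w2 e1 e2 t = (w1*(e1+B)/L + w2*e2/(L+A)) + (w1*g/L + w2*g/(L+A) - 1)*t"
proof -
  have "Phi L A B g w1 w2 e1 e2 t = w1*((e1+g*t+B)/L) + w2*((e2+g*t)/(L+A)) - t"
    unfolding Phi_def using hinv_left[OF L AA BB] hinv_right[OF L AA BB] assms by simp
  then show ?thesis by (simp add: add_divide_distrib algebra_simps)
qed

lemma Phi_kink0:
  assumes "L \<le> g" "g < L + A" "e1 \<le> e2"
  shows "Phi L A B g w1 w2 e1 e2 t \<le> max (Phi L A B g w1 w2 e1 e2 ((-B*(L+A)/A - e1)/g))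
                                           (Phi L A B g w1 w2 e1 e2 ((-B*(L+A)/A - e2)/g))"
proof -
  define z0 where "z0 = -B*(L+A)/A"
  define t1 where "t1 = (z0 - e1)/g"
  define t2 where "t2 = (z0 - e2)/g"
  have gt1: "e1 + g*t1 = z0" "e2 + g*t2 = z0" using g by (auto simp: t1_def t2_def field_simps)
  have t21: "t2 \<le> t1" using assms g by (auto simp: t1_def t2_def divide_right_mono)
  have gmono: "g*s \<le> g*s'" if "s \<le> s'" for s s' using g that by simp
  consider "t \<le> t2" | "t2 \<le> t \<and> t \<le> t1" | "t1 \<le> t" by linarith
  then have "Phi L A B g w1 w2 e1 e2 t \<le> max (Phi L A B g w1 w2 e1 e2 t1) (Phi L A B g w1 w2 e1 e2 t2)"
  proof cases
    case 1
    have l1: "e1 + g*t \<le> z0" "e2 + g*t \<le> z0" using gmono[OF 1] gmono[OF t21] gt1 assms by linarith+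
    have l2: "e1 + g*t2 \<le> z0" "e2 + g*t2 \<le> z0" using gmono[OF t21] gt1 assms by linarith+
    have "(g/L - 1)*t \<le> (g/L - 1)*t2" using 1 assms L by (intro mult_left_mono) (auto simp: field_simps)
    then have "Phi L A B g w1 w2 e1 e2 t \<le> Phi L A B g w1 w2 e1 e2 t2"
      using Phi_left[OF l1[unfolded z0_def]] Phi_left[OF l2[unfolded z0_def]] by simp
    then show ?thesis by simp
  next
    case 3
    have l1: "e1 + g*t \<ge> z0" "e2 + g*t \<ge> z0" using gmono[OF 3] gmono[OF t21] gt1 assms by linarith+
    have l2: "e1 + g*t1 \<ge> z0" "e2 + g*t1 \<ge> z0" using gmono[OF t21] gt1 assms by linarith+
    have "(g/(L+A) - 1)*t \<le> (g/(L+A) - 1)*t1" using 3 assms L AA by (intro mult_left_mono_neg) (auto simp: field_simps)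
    then have "Phi L A B g w1 w2 e1 e2 t \<le> Phi L A B g w1 w2 e1 e2 t1"
      using Phi_right[OF l1[unfolded z0_def]] Phi_right[OF l2[unfolded z0_def]] by simp
    then show ?thesis by simp
  next
    case 2
    have mid: "Phi L A B g w1 w2 e1 e2 s = (w1*(e1+B)/L + w2*e2/(L+A)) + (w1*g/L + w2*g/(L+A) - 1)*s"
      if "t2 \<le> s" "s \<le> t1" for s
    proof -
      have "e1 + g*s \<le> z0" "e2 + g*s \<ge> z0" using gmono[OF that(1)] gmono[OF that(2)] gt1 by linarith+
      then show ?thesis using Phi_mid z0_def by simp
    qed
    show ?thesis using lin_max[of t2 t t1 "w1*(e1+B)/L + w2*e2/(L+A)" "w1*g/L + w2*g/(L+A) - 1"] 2 t21
      mid[of t] mid[of t1] mid[of t2] by auto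
  qed
  then show ?thesis by (simp add: t1_def t2_def z0_def max.commute)
qed

lemma Phi_lip:
  assumes "e1 \<le> e1'"
  shows "Phi L A B g w1 w2 e1' e2 t - w1*(e1'-e1)/L \<le> Phi L A B g w1 w2 e1 e2 t"
    and "Phi L A B g w1 w2 e1 e2 t \<le> Phi L A B g w1 w2 e1' e2 t"
proof -
  have a: "hinv L A B (e1' + g*t) - hinv L A B (e1 + g*t) \<le> (e1'-e1)/L"
    using hinv_lip[OF L AA BB, of "e1 + g*t" "e1' + g*t"] assms by simp
  have b: "hinv L A B (e1 + g*t) \<le> hinv L A B (e1' + g*t)"
    using hinv_mono[OF L AA BB] assms by simp
  have "w1 * (hinv L A B (e1' + g*t) - hinv L A B (e1 + g*t)) \<le> w1 * ((e1'-e1)/L)"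
    using a w by (intro mult_left_mono) auto
  then show "Phi L A B g w1 w2 e1' e2 t - w1*(e1'-e1)/L \<le> Phi L A B g w1 w2 e1 e2 t"
    unfolding Phi_def by (simp add: algebra_simps)
  have "w1 * hinv L A B (e1 + g*t) \<le> w1 * hinv L A B (e1' + g*t)"
    using b w by (intro mult_left_mono) auto
  then show "Phi L A B g w1 w2 e1 e2 t \<le> Phi L A B g w1 w2 e1' e2 t"
    unfolding Phi_def by simp
qed

end


lemma Phi_swap: "Phi L A B g w1 w2 e1 e2 t = Phi L A B g w2 w1 e2 e1 t"
  by (simp add: Phi_def)

lemma Phi_kink:
  assumes L: "L > 0" and AA: "A > 0" and BB: "B > 0" and g: "g > 0"
    and w: "w1 \<ge> 0" "w2 \<ge> 0" "w1 + w2 = 1" and "L \<le> g" "g < L + A"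
  shows "Phi L A B g w1 w2 e1 e2 t \<le> max (Phi L A B g w1 w2 e1 e2 ((-B*(L+A)/A - e1)/g))
                                           (Phi L A B g w1 w2 e1 e2 ((-B*(L+A)/A - e2)/g))"
proof (cases "e1 \<le> e2")
  case True then show ?thesis using Phi_kink0[OF assms] by blast
next
  case False
  have w': "w2 \<ge> 0" "w1 \<ge> 0" "w2 + w1 = 1" using w by auto
  show ?thesis using Phi_kink0[OF L AA BB g w' assms(8,9), of e2 e1 t] False
    by (simp add: Phi_swap[of L A B g w1 w2] max.commute)
qed

lemma Phi_closed:
  assumes L: "L > 0" and AA: "A > 0" and BB: "B > 0" and g: "g > 0"
    and w: "w1 \<ge> 0" "w2 \<ge> 0" "w1 + w2 = 1" and "L \<le> g" "g < L + A"
    and H: "\<forall>e'>e1. \<exists>t. Phi L A B g w1 w2 e' e2 t \<ge> 0"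
  shows "\<exists>t. Phi L A B g w1 w2 e1 e2 t \<ge> 0"
proof -
  define K where "K = max (Phi L A B g w1 w2 e1 e2 ((-B*(L+A)/A - e1)/g))
                          (Phi L A B g w1 w2 e1 e2 ((-B*(L+A)/A - e2)/g))"
  have bound: "K \<ge> - w1*(e'-e1)/L" if e1e: "e' > e1" for e'
  proof -
    obtain t where t: "Phi L A B g w1 w2 e' e2 t \<ge> 0" using H e1e by blast
    have "Phi L A B g w1 w2 e' e2 t - w1*(e'-e1)/L \<le> Phi L A B g w1 w2 e1 e2 t"
      using Phi_lip(1)[OF L AA BB g w, of e1 e'] e1e by simp
    moreover have "Phi L A B g w1 w2 e1 e2 t \<le> K" unfolding K_def by (rule Phi_kink[OF assms(1-9)])
    ultimately show ?thesis using t by simp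
  qed
  have "K \<ge> 0"
  proof (rule ccontr)
    assume "\<not> K \<ge> 0"
    then have K: "K < 0" by simp
    define eta where "eta = - K * L / (2*(w1+1))"
    have "-K*L > 0" using K L by (simp add: mult_neg_pos)
    moreover have "2*(w1+1) > 0" using w by simp
    ultimately have eta: "eta > 0" unfolding eta_def by (simp only: divide_pos_pos)
    have w1p: "w1 + 1 \<noteq> 0" "1 + w1 \<noteq> 0" "2 + 2*w1 \<noteq> 0" "2*w1 + 2 \<noteq> 0" using w by auto
    have el: "eta/L = -K/(2*(w1+1))" using L by (simp add: eta_def)
    have "w1*eta/L = w1*(eta/L)" by simp
    also have "\<dots> = - K * (w1/(2*(w1+1)))" unfolding el by simp
    finally have "w1*eta/L = - K * (w1/(2*(w1+1)))" .
    also have "\<dots> < -K"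
    proof -
      have "w1/(2*(w1+1)) < 1" using w by (simp add: field_simps)
      then have "(-K) * (w1/(2*(w1+1))) < (-K) * 1" using K by (intro mult_strict_left_mono) auto
      then show ?thesis by simp
    qed
    finally have "K < - w1*((e1+eta)-e1)/L" by simp
    then show False using bound[of "e1+eta"] eta by simp
  qed
  then show ?thesis unfolding K_def by (metis max_def)
qed

context
  fixes L A B d be w1 w2 :: real
  assumes L: "L > 0" and AA: "A > 0" and BB: "B > 0" and d: "0 \<le> d" "d < A"
    and be: "-d \<le> be" "be \<le> L"
    and w: "w1 \<ge> 0" "w2 \<ge> 0" "w1 + w2 = 1"
begin

lemma ff_r: "y \<ge> -B/A \<Longrightarrow> ff A B y = A*y"
  using AA by (auto simp: ff_def field_simps)
lemma ff_l: "y \<le> -B/A \<Longrightarrow> ff A B y = -B"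
  using AA by (auto simp: ff_def field_simps)
lemma ll_r: "y0 \<ge> -B/A \<Longrightarrow> y0 \<le> y \<Longrightarrow> ll A B d y0 \<le> ll A B d y"
proof -
  assume a: "y0 \<ge> -B/A" "y0 \<le> y"
  have "(A-d)*y0 \<le> (A-d)*y" using a d by (intro mult_left_mono) auto
  then show ?thesis using a ff_r[of y0] ff_r[of y] by (simp add: ll_def algebra_simps)
qed
lemma ll_l: "y \<le> -B/A \<Longrightarrow> y0 \<le> y \<Longrightarrow> ll A B d y \<le> ll A B d y0"
proof -
  assume a: "y \<le> -B/A" "y0 \<le> y"
  have "d*y0 \<le> d*y" using a d by (intro mult_left_mono) auto
  then show ?thesis using a ff_l[of y0] ff_l[of y] by (simp add: ll_def algebra_simps)
qed
lemma ll_min: "ll A B d (-B/A) \<le> ll A B d y"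
  using ll_r[of "-B/A" y] ll_l[of "-B/A" y] by (cases "y \<ge> -B/A") auto

lemma hh_inj_le: "hh L A B y \<le> hh L A B y' \<Longrightarrow> y \<le> y'"
  using hinv_mono[OF L AA BB] hinv_hh[OF L AA BB] by metis

lemma core_step1:
  assumes e: "e \<ge> 0" and u: "be*(u1-u2) + ff A B u1 - ff A B u2 = e"
  shows "\<exists>z. w1 * ll A B d (hinv L A B (hh L A B z + e)) + w2 * ll A B d z
             \<le> w1 * ll A B d u1 + w2 * ll A B d u2"
proof -
  define y0 where "y0 = -B/A"
  have "ff A B y0 = A*y0" using ff_r[of y0] y0_def by simp
  then have hy0: "hh L A B y0 = (L+A)*y0" by (simp add: hh_def algebra_simps)
  have hi: "hinv L A B (hh L A B y) = y" for y using hinv_hh[OF L AA BB] .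
  have ih: "hh L A B (hinv L A B z) = z" for z using hh_hinv[OF L AA BB] .
  have hm: "z \<le> z' \<Longrightarrow> hinv L A B z \<le> hinv L A B z'" for z z' using hinv_mono[OF L AA BB] .
  have wl: "w1 * a + w2 * b \<le> w1 * a' + w2 * b'" if "a \<le> a'" "b \<le> b'" for a b a' b'
    using that w by (intro add_mono mult_left_mono) auto
  show ?thesis
  proof (cases "u2 \<le> u1")
    case True
    have E: "hh L A B u1 - hh L A B u2 \<ge> e"
    proof -
      have "be*(u1-u2) \<le> L*(u1-u2)" using True be by (intro mult_right_mono) auto
      then show ?thesis using u by (simp add: hh_def algebra_simps)
    qed
    show ?thesis
    proof (cases "u2 \<ge> y0")
      case True
      define y1 where "y1 = hinv L A B (hh L A B u2 + e)"
      have "y1 \<ge> u2" using hm[of "hh L A B u2" "hh L A B u2 + e"] e hi by (simp add: y1_def)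
      moreover have "y1 \<le> u1" using hm[of "hh L A B u2 + e" "hh L A B u1"] E hi by (simp add: y1_def)
      ultimately have "ll A B d y1 \<le> ll A B d u1" using ll_r[of u2 y1] ll_r[of y1 u1] True y0_def by auto
      then show ?thesis using wl[of "ll A B d y1" "ll A B d u1" "ll A B d u2" "ll A B d u2"]
        by (intro exI[of _ u2]) (simp add: y1_def)
    next
      case False
      show ?thesis
      proof (cases "hh L A B u1 - hh L A B y0 \<ge> e")
        case True
        define y1 where "y1 = hinv L A B (hh L A B y0 + e)"
        have "y1 \<ge> y0" using hm[of "hh L A B y0" "hh L A B y0 + e"] e hi by (simp add: y1_def)
        moreover have "y1 \<le> u1" using hm[of "hh L A B y0 + e" "hh L A B u1"] True hi by (simp add: y1_def)
        ultimately have "ll A B d y1 \<le> ll A B d u1" using ll_r[of y0 y1] ll_r[of y1 u1] y0_def by auto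
        moreover have "ll A B d y0 \<le> ll A B d u2" using ll_min y0_def by simp
        ultimately show ?thesis using wl[of "ll A B d y1" "ll A B d u1" "ll A B d y0" "ll A B d u2"]
          by (intro exI[of _ y0]) (simp add: y1_def)
      next
        case F2: False
        define z where "z = hinv L A B (hh L A B u1 - e)"
        have hz: "hh L A B z + e = hh L A B u1" using ih by (simp add: z_def)
        have "z \<ge> u2" using hm[of "hh L A B u2" "hh L A B u1 - e"] E hi by (simp add: z_def)
        moreover have "z \<le> y0" using hm[of "hh L A B u1 - e" "hh L A B y0"] F2 hi by (simp add: z_def)
        ultimately have "ll A B d z \<le> ll A B d u2" using ll_l[of z u2] y0_def by auto
        then show ?thesis using wl[of "ll A B d u1" "ll A B d u1" "ll A B d z" "ll A B d u2"]
          by (intro exI[of _ z]) (simp add: hz hi)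
      qed
    qed
  next
    case False
    have u1y0: "u1 < y0"
    proof (rule ccontr)
      assume "\<not> u1 < y0"
      then have a: "u1 \<ge> y0" "u2 \<ge> y0" using False by auto
      have "e = (be + A)*(u1-u2)" using u ff_r[of u1] ff_r[of u2] a y0_def by (simp add: algebra_simps)
      moreover have "(be + A)*(u1-u2) < 0" using False be d by (intro mult_pos_neg) auto
      ultimately show False using e by simp
    qed
    have ffu1: "ff A B u1 = -B" using ff_l[of u1] u1y0 y0_def by simp
    have ebound: "e \<le> d*(y0-u1)"
    proof (cases "be \<ge> 0")
      case True
      have "be*(u1-u2) \<le> 0" using True False by (simp add: mult_nonneg_nonpos)
      moreover have "ff A B u1 \<le> ff A B u2" using ffu1 by (simp add: ff_def)
      ultimately have "e \<le> 0" using u by simp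
      moreover have "d*(y0-u1) \<ge> 0" using d u1y0 by simp
      ultimately show ?thesis by simp
    next
      case bneg: False
      have "be*(y0-u2) \<le> B + ff A B u2"
      proof (cases "u2 \<le> y0")
        case True
        then show ?thesis using ff_l[of u2] y0_def bneg by (simp add: mult_nonpos_nonneg)
      next
        case F3: False
        have "B + ff A B u2 = A*(u2-y0)" using ff_r[of u2] F3 y0_def AA by (simp add: field_simps)
        moreover have "(-be)*(u2-y0) \<le> A*(u2-y0)" using F3 be d by (intro mult_right_mono) auto
        ultimately show ?thesis by (simp add: algebra_simps)
      qed
      then have "e \<le> be*(u1-y0)" using u ffu1 by (simp add: algebra_simps)
      also have "\<dots> = (-be)*(y0-u1)" by (simp add: algebra_simps)
      also have "\<dots> \<le> d*(y0-u1)" using be u1y0 by (intro mult_right_mono) auto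
      finally show ?thesis .
    qed
    define v where "v = e/(L+A)"
    have v: "v \<ge> 0" using e L AA by (simp add: v_def)
    have y0v: "y0 + v \<ge> -B/A" using v y0_def by simp
    have ffv: "ff A B (y0+v) = A*(y0+v)" using ff_r[OF y0v] .
    have ff0: "ff A B y0 = A*y0" using ff_r[of y0] y0_def by simp
    have hv: "hh L A B (y0 + v) = hh L A B y0 + e"
    proof -
      have "hh L A B (y0+v) = (L+A)*(y0+v)" using ffv by (simp add: hh_def algebra_simps)
      also have "\<dots> = (L+A)*y0 + (L+A)*v" by (simp add: algebra_simps)
      also have "(L+A)*v = e" using L AA by (simp add: v_def)
      finally show ?thesis using hy0 by simp
    qed
    have lly1: "ll A B d (y0+v) = ll A B d y0 + (A-d)*v"
      using ffv ff0 by (simp add: ll_def algebra_simps)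
    have "(A-d)*v \<le> e"
    proof -
      have "(A-d)*v \<le> (L+A)*v" using v d L by (intro mult_right_mono) auto
      then show ?thesis using L AA by (simp add: v_def)
    qed
    have llu1: "ll A B d u1 = ll A B d y0 + d*(y0-u1)"
      using ffu1 ff_l[of y0] y0_def by (simp add: ll_def algebra_simps)
    have "w1 * ll A B d (y0+v) + w2 * ll A B d y0 \<le> w1 * ll A B d u1 + w2 * ll A B d u2"
      using wl[of "ll A B d (y0+v)" "ll A B d u1" "ll A B d y0" "ll A B d u2"] lly1 llu1
        \<open>(A-d)*v \<le> e\<close> ebound ll_min[of u2] y0_def by simp
    moreover have "hinv L A B (hh L A B y0 + e) = y0 + v" using hv hi by metis
    ultimately show ?thesis by (intro exI[of _ y0]) simp
  qed
qed

lemma core_pos: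
  assumes e: "e \<ge> 0" and u: "be*(u1-u2) + ff A B u1 - ff A B u2 = e"
  shows "\<exists>y1 y2. hh L A B y1 - hh L A B y2 = e \<and>
           w1 * ll A B d y1 + w2 * ll A B d y2 = w1 * ll A B d u1 + w2 * ll A B d u2"
proof -
  define T where "T = w1 * ll A B d u1 + w2 * ll A B d u2"
  define ph where "ph = (\<lambda>z. w1 * ll A B d (hinv L A B (hh L A B z + e)) + w2 * ll A B d z)"
  obtain z0 where z0: "ph z0 \<le> T" using core_step1[OF e u] unfolding ph_def T_def by blast
  define z1 where "z1 = max z0 (max (-B/A) (T/(A-d)))"
  have z01: "z0 \<le> z1" by (simp add: z1_def)
  have "ph z1 \<ge> T"
  proof -
    have zy: "z1 \<ge> -B/A" by (simp add: z1_def)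
    have "hinv L A B (hh L A B z1 + e) \<ge> hinv L A B (hh L A B z1)"
      using hinv_mono[OF L AA BB] e by simp
    then have "hinv L A B (hh L A B z1 + e) \<ge> z1" using hinv_hh[OF L AA BB] by simp
    then have "ll A B d (hinv L A B (hh L A B z1 + e)) \<ge> ll A B d z1" using ll_r zy by blast
    then have "ph z1 \<ge> w1 * ll A B d z1 + w2 * ll A B d z1"
      unfolding ph_def using w by (simp add: mult_left_mono)
    also have "w1 * ll A B d z1 + w2 * ll A B d z1 = ll A B d z1" using w
      by (metis distrib_right mult_1)
    also have "ll A B d z1 = (A-d)*z1" using ff_r[OF zy] by (simp add: ll_def algebra_simps)
    finally have a: "ph z1 \<ge> (A-d)*z1" .
    have "T/(A-d) \<le> z1" by (simp add: z1_def)
    then have "T \<le> (A-d)*z1" using d by (simp add: field_simps)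
    then show ?thesis using a by simp
  qed
  moreover have "continuous_on {z0..z1} ph"
    unfolding ph_def using L AA by (intro continuous_intros) auto
  ultimately obtain z where "ph z = T" using IVT'[of ph z0 T z1] z0 z01 by blast
  then show ?thesis unfolding ph_def T_def
    using hh_hinv[OF L AA BB, of "hh L A B z + e"]
    by (intro exI[of _ "hinv L A B (hh L A B z + e)"] exI[of _ z]) simp
qed

end

lemma core_any:
  assumes L: "L > 0" and AA: "A > 0" and BB: "B > 0" and d: "0 \<le> d" "d < A"
    and be: "-d \<le> be" "be \<le> L"
    and w: "w1 \<ge> 0" "w2 \<ge> 0" "w1 + w2 = 1"
    and u: "be*(u1-u2) + ff A B u1 - ff A B u2 = e"
  shows "\<exists>y1 y2. hh L A B y1 - hh L A B y2 = e \<and>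
           w1 * ll A B d y1 + w2 * ll A B d y2 = w1 * ll A B d u1 + w2 * ll A B d u2"
proof (cases "e \<ge> 0")
  case True then show ?thesis using core_pos[OF assms(1-10) True u] by blast
next
  case False
  have w': "w2 \<ge> 0" "w1 \<ge> 0" "w2 + w1 = 1" using w by auto
  have u': "be*(u2-u1) + ff A B u2 - ff A B u1 = -e" using u by (simp add: algebra_simps)
  obtain y1 y2 where "hh L A B y1 - hh L A B y2 = -e"
     "w2 * ll A B d y1 + w1 * ll A B d y2 = w2 * ll A B d u2 + w1 * ll A B d u1"
    using core_pos[OF L AA BB d be w' _ u'] False by auto
  then show ?thesis by (intro exI[of _ y2] exI[of _ y1]) auto
qed



lemma sig_ff: "sig > 0 \<Longrightarrow> sig * max (psi*y) (-mu) = ff (sig*psi) (sig*mu) y"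
  by (simp add: ff_def max_mult_distrib_left)

lemma G_alg:
  fixes lam y a pe M sig m N e :: real
  assumes l0: "lam > 0" and h: "(y - a*pe)/lam = M*((1-a)*pe/lam) - sig*(m - N*pe) + e"
  shows "y/lam + sig*m - ((a + M*(1-a) + lam*sig*N)/lam)*pe = e"
proof -
  have l: "lam \<noteq> 0" using l0 by simp
  have "y - a*pe = lam * ((y - a*pe)/lam)" using l by simp
  also have "\<dots> = lam * (M*((1-a)*pe/lam) - sig*(m - N*pe) + e)" using h by simp
  also have "\<dots> = M*(1-a)*pe - lam*sig*(m - N*pe) + lam*e" using l by (simp add: field_simps)
  finally have y: "y = a*pe + M*(1-a)*pe - lam*sig*(m - N*pe) + lam*e" by simp
  show ?thesis unfolding y using l by (simp add: field_simps)
qed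
lemma G_alg2:
  fixes lam y a pe M sig m N e :: real
  assumes l0: "lam > 0" and h: "y/lam + sig*m - ((a + M*(1-a) + lam*sig*N)/lam)*pe = e"
  shows "(y - a*pe)/lam = M*((1-a)*pe/lam) - sig*(m - N*pe) + e"
proof -
  have l: "lam \<noteq> 0" using l0 by simp
  have "y = lam * (y/lam)" using l by simp
  also have "y/lam = e - sig*m + ((a + M*(1-a) + lam*sig*N)/lam)*pe" using h by simp
  also have "lam * (e - sig*m + ((a + M*(1-a) + lam*sig*N)/lam)*pe) = lam*e - lam*sig*m + (a + M*(1-a) + lam*sig*N)*pe"
    using l by (simp add: field_simps)
  finally have y: "y = lam*e - lam*sig*m + (a + M*(1-a) + lam*sig*N)*pe" .
  show ?thesis unfolding y using l by (simp add: field_simps)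
qed

lemma rpe_y:
  fixes bet sig lam mu psi M Mf N p q e1 e2 :: real
  assumes lam: "lam > 0" and sig: "sig > 0" and a1: "Mf*bet \<noteq> 1"
  defines "qb \<equiv> (1-p)/(2-p-q)"
  defines "delta \<equiv> (M - 1) * (1 - Mf * bet) + lam * sig * N"
  shows "BRRPE_exists bet sig lam mu psi M Mf N p q e1 e2 \<longleftrightarrow>
    (\<exists>y1 y2. hh (1/lam) (sig*psi) (sig*mu) y1 - ((1+delta)/lam)*((1-qb)*y1 + qb*y2) = e1 \<and>
             hh (1/lam) (sig*psi) (sig*mu) y2 - ((1+delta)/lam)*((1-qb)*y1 + qb*y2) = e2)"
proof
  assume "BRRPE_exists bet sig lam mu psi M Mf N p q e1 e2"
  then obtain x1 y1 x2 y2 where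
    S1: "solves_state bet sig lam mu psi M Mf N e1 x1 y1 (qb * x2 + (1 - qb) * x1) (qb * y2 + (1 - qb) * y1)" and
    S2: "solves_state bet sig lam mu psi M Mf N e2 x2 y2 (qb * x2 + (1 - qb) * x1) (qb * y2 + (1 - qb) * y1)"
    unfolding BRRPE_exists_def qb_def Let_def by blast
  define a where "a = Mf*bet"
  define xe where "xe = qb * x2 + (1 - qb) * x1"
  define pe where "pe = qb * y2 + (1 - qb) * y1"
  define i1 where "i1 = max (psi*y1) (-mu)"
  define i2 where "i2 = max (psi*y2) (-mu)"
  have E1: "x1 = M*xe - sig*(i1 - N*pe) + e1" and P1: "y1 = lam*x1 + a*pe"
    using S1 unfolding solves_state_def Let_def xe_def pe_def i1_def a_def by (auto simp: mult.assoc)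
  have E2: "x2 = M*xe - sig*(i2 - N*pe) + e2" and P2: "y2 = lam*x2 + a*pe"
    using S2 unfolding solves_state_def Let_def xe_def pe_def i2_def a_def by (auto simp: mult.assoc)
  have avg: "pe = lam*xe + a*pe"
  proof -
    have "qb*y2 + (1-qb)*y1 = qb*(lam*x2 + a*pe) + (1-qb)*(lam*x1 + a*pe)"
      by (subst P1, subst P2, rule refl)
    then have "pe = qb*(lam*x2 + a*pe) + (1-qb)*(lam*x1 + a*pe)" unfolding pe_def .
    also have "\<dots> = lam*xe + a*pe" by (simp add: xe_def algebra_simps)
    finally show ?thesis .
  qed
  have l: "lam \<noteq> 0" using lam by simp
  have xe: "xe = (1-a)*pe/lam" using avg l by (simp add: field_simps)
  have x1: "x1 = (y1 - a*pe)/lam" using P1 l by (simp add: field_simps)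
  have x2: "x2 = (y2 - a*pe)/lam" using P2 l by (simp add: field_simps)
  have d: "1 + delta = a + M*(1-a) + lam*sig*N" by (simp add: delta_def a_def algebra_simps)
  have G: "hh (1/lam) (sig*psi) (sig*mu) y - ((1+delta)/lam)*pe = e"
    if "(y - a*pe)/lam = M*((1-a)*pe/lam) - sig*(max (psi*y) (-mu) - N*pe) + e" for y e
  proof -
    have "hh (1/lam) (sig*psi) (sig*mu) y = y/lam + sig * max (psi*y) (-mu)"
      using sig_ff[OF sig] by (simp add: hh_def)
    then show ?thesis using G_alg[OF lam that] unfolding d by simp
  qed
  have "hh (1/lam) (sig*psi) (sig*mu) y1 - ((1+delta)/lam)*pe = e1"
    using G E1 unfolding x1 xe i1_def by blast
  moreover have "hh (1/lam) (sig*psi) (sig*mu) y2 - ((1+delta)/lam)*pe = e2"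
    using G E2 unfolding x2 xe i2_def by blast
  ultimately show "\<exists>y1 y2. hh (1/lam) (sig*psi) (sig*mu) y1 - ((1+delta)/lam)*((1-qb)*y1 + qb*y2) = e1 \<and>
             hh (1/lam) (sig*psi) (sig*mu) y2 - ((1+delta)/lam)*((1-qb)*y1 + qb*y2) = e2"
    unfolding pe_def by (intro exI[of _ y1] exI[of _ y2]) (simp add: algebra_simps)
next
  assume "\<exists>y1 y2. hh (1/lam) (sig*psi) (sig*mu) y1 - ((1+delta)/lam)*((1-qb)*y1 + qb*y2) = e1 \<and>
             hh (1/lam) (sig*psi) (sig*mu) y2 - ((1+delta)/lam)*((1-qb)*y1 + qb*y2) = e2"
  then obtain y1 y2 where H1: "hh (1/lam) (sig*psi) (sig*mu) y1 - ((1+delta)/lam)*((1-qb)*y1 + qb*y2) = e1"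
    and H2: "hh (1/lam) (sig*psi) (sig*mu) y2 - ((1+delta)/lam)*((1-qb)*y1 + qb*y2) = e2" by blast
  define a where "a = Mf*bet"
  define pe where "pe = qb * y2 + (1 - qb) * y1"
  define x1 where "x1 = (y1 - a*pe)/lam"
  define x2 where "x2 = (y2 - a*pe)/lam"
  have l: "lam \<noteq> 0" using lam by simp
  have xe: "qb * x2 + (1 - qb) * x1 = (1-a)*pe/lam" unfolding x1_def x2_def pe_def using l
    by (simp add: field_simps)
  have d: "1 + delta = a + M*(1-a) + lam*sig*N" by (simp add: delta_def a_def algebra_simps)
  have G: "solves_state bet sig lam mu psi M Mf N e x y ((1-a)*pe/lam) pe"
    if "hh (1/lam) (sig*psi) (sig*mu) y - ((1+delta)/lam)*pe = e" "x = (y - a*pe)/lam" for x y e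
  proof -
    have "hh (1/lam) (sig*psi) (sig*mu) y = y/lam + sig * max (psi*y) (-mu)"
      using sig_ff[OF sig] by (simp add: hh_def)
    then have "(y - a*pe)/lam = M*((1-a)*pe/lam) - sig*(max (psi*y) (-mu) - N*pe) + e"
      using G_alg2[OF lam, of y sig "max (psi*y) (-mu)" a M N pe e] that(1) unfolding d by simp
    then have hx: "x = M*((1-a)*pe/lam) - sig*(max (psi*y) (-mu) - N*pe) + e" using that(2) by simp
    have hy: "y = lam*x + a*pe" using that(2) l by (simp add: field_simps)
    show ?thesis unfolding solves_state_def Let_def using hx hy by (simp add: a_def mult.assoc)
  qed
  have "(1-qb)*y1 + qb*y2 = pe" by (simp add: pe_def)
  then have "solves_state bet sig lam mu psi M Mf N e1 x1 y1 (qb * x2 + (1 - qb) * x1) (qb * y2 + (1 - qb) * y1)"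
    "solves_state bet sig lam mu psi M Mf N e2 x2 y2 (qb * x2 + (1 - qb) * x1) (qb * y2 + (1 - qb) * y1)"
    using G[of y1 e1 x1] G[of y2 e2 x2] H1 H2 unfolding xe by (auto simp: x1_def x2_def pe_def)
  then show "BRRPE_exists bet sig lam mu psi M Mf N p q e1 e2"
    unfolding BRRPE_exists_def Let_def qb_def by blast
qed



lemma bre_alg:
  fixes x1 x2 y1 y2 i1 i2 e1 e2 lam a p q M N sig w1 w2 :: real
  assumes l: "lam \<noteq> 0"
   and E1: "x1 = M*(p*x1 + (1-p)*x2) - sig*(i1 - N*(p*y1+(1-p)*y2)) + e1"
   and P1: "y1 = lam*x1 + a*(p*y1 + (1-p)*y2)"
   and E2: "x2 = M*((1-q)*x1 + q*x2) - sig*(i2 - N*((1-q)*y1 + q*y2)) + e2"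
   and P2: "y2 = lam*x2 + a*((1-q)*y1 + q*y2)"
  shows "((1-a*(p+q-1))*(1-(p+q-1)*M) - (p+q-1)*sig*N*lam)/lam * (y1-y2) + sig*i1 - sig*i2 = e1 - e2"
proof -
  have e1: "e1 = x1 - M*(p*x1 + (1-p)*x2) + sig*(i1 - N*(p*y1+(1-p)*y2))" using E1 by linarith
  have e2: "e2 = x2 - M*((1-q)*x1 + q*x2) + sig*(i2 - N*((1-q)*y1 + q*y2))" using E2 by linarith
  have x1: "x1 = (y1 - a*(p*y1 + (1-p)*y2))/lam" using P1 l by (simp add: field_simps)
  have x2: "x2 = (y2 - a*((1-q)*y1 + q*y2))/lam" using P2 l by (simp add: field_simps)
  show ?thesis unfolding e1 e2 unfolding x1 x2 using l by (simp add: field_simps)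
qed

lemma wavg:
  fixes w1 w2 p q x1 x2 :: real
  assumes W: "w1*(1-p) = w2*(1-q)"
  shows "w1*(p*x1 + (1-p)*x2) + w2*((1-q)*x1 + q*x2) = w1*x1 + w2*x2"
proof -
  have "w1*(p*x1 + (1-p)*x2) + w2*((1-q)*x1 + q*x2) - (w1*x1 + w2*x2) = (w2*(1-q) - w1*(1-p))*(x1 - x2)"
    by (simp add: algebra_simps)
  then show ?thesis using W by simp
qed

lemma avg_alg:
  fixes lam a tau xb M sig I N E :: real
  assumes l: "lam \<noteq> 0" and T: "tau = lam*xb + a*tau" and X: "xb = M*xb - sig*I + sig*N*tau + E"
  shows "sig*I - ((M-1)*(1-a) + lam*sig*N)/lam * tau = E"
proof -
  have xb: "xb = (1-a)*tau/lam" using T l by (simp add: field_simps)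
  have E: "E = xb - M*xb + sig*I - sig*N*tau" using X by linarith
  show ?thesis unfolding E xb using l by (simp add: field_simps)
qed

lemma bre_alg2:
  fixes x1 x2 y1 y2 i1 i2 e1 e2 lam a p q M N sig w1 w2 :: real
  assumes l: "lam \<noteq> 0" and W: "w1*(1-p) = w2*(1-q)" "w1 + w2 = 1"
   and E1: "x1 = M*(p*x1 + (1-p)*x2) - sig*(i1 - N*(p*y1+(1-p)*y2)) + e1"
   and P1: "y1 = lam*x1 + a*(p*y1 + (1-p)*y2)"
   and E2: "x2 = M*((1-q)*x1 + q*x2) - sig*(i2 - N*((1-q)*y1 + q*y2)) + e2"
   and P2: "y2 = lam*x2 + a*((1-q)*y1 + q*y2)"
  shows "w1*(sig*i1 - ((M-1)*(1-a) + lam*sig*N)/lam*y1)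
       + w2*(sig*i2 - ((M-1)*(1-a) + lam*sig*N)/lam*y2) = w1*e1 + w2*e2"
proof -
  define xb where "xb = w1*x1 + w2*x2"
  define tau where "tau = w1*y1 + w2*y2"
  define I where "I = w1*i1 + w2*i2"
  have T: "tau = lam*xb + a*tau"
  proof -
    have "tau = w1*(lam*x1 + a*(p*y1 + (1-p)*y2)) + w2*(lam*x2 + a*((1-q)*y1 + q*y2))"
      unfolding tau_def by (subst P1, subst P2, rule refl)
    also have "\<dots> = lam*(w1*x1 + w2*x2) + a*(w1*(p*y1 + (1-p)*y2) + w2*((1-q)*y1 + q*y2))"
      by (simp add: algebra_simps)
    also have "\<dots> = lam*xb + a*tau" unfolding wavg[OF W(1)] xb_def tau_def ..
    finally show ?thesis .
  qed
  have X: "xb = M*xb - sig*I + sig*N*tau + (w1*e1 + w2*e2)"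
  proof -
    have "xb = w1*(M*(p*x1 + (1-p)*x2) - sig*(i1 - N*(p*y1+(1-p)*y2)) + e1)
             + w2*(M*((1-q)*x1 + q*x2) - sig*(i2 - N*((1-q)*y1 + q*y2)) + e2)"
      unfolding xb_def by (subst E1, subst E2, rule refl)
    also have "\<dots> = M*(w1*(p*x1 + (1-p)*x2) + w2*((1-q)*x1 + q*x2)) - sig*(w1*i1 + w2*i2)
        + sig*N*(w1*(p*y1 + (1-p)*y2) + w2*((1-q)*y1 + q*y2)) + (w1*e1 + w2*e2)"
      using W(2) by (simp add: algebra_simps)
    also have "\<dots> = M*xb - sig*I + sig*N*tau + (w1*e1 + w2*e2)"
      unfolding wavg[OF W(1)] xb_def tau_def I_def ..
    finally show ?thesis .
  qed
  obtain D where D: "D = ((M-1)*(1-a) + lam*sig*N)/lam" by blast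
  have "sig*I - D * tau = w1*e1 + w2*e2" unfolding D by (rule avg_alg[OF l T X])
  then show ?thesis unfolding D[symmetric] I_def tau_def by (simp add: algebra_simps)
qed



lemma bre_y:
  fixes bet sig lam mu psi M Mf N p q e1 e2 :: real
  assumes lam: "lam > 0" and sig: "sig > 0" and pq: "2 - p - q \<noteq> 0"
    and H: "BRE_exists bet sig lam mu psi M Mf N p q e1 e2"
  defines "qb \<equiv> (1-p)/(2-p-q)"
  defines "delta \<equiv> (M - 1) * (1 - Mf * bet) + lam * sig * N"
  defines "be \<equiv> ((1-Mf*bet*(p+q-1))*(1-(p+q-1)*M) - (p+q-1)*sig*N*lam)/lam"
  shows "\<exists>y1 y2. be*(y1-y2) + ff (sig*psi) (sig*mu) y1 - ff (sig*psi) (sig*mu) y2 = e1 - e2 \<and>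
     (1-qb) * ll (sig*psi) (sig*mu) (delta/lam) y1 + qb * ll (sig*psi) (sig*mu) (delta/lam) y2
       = (1-qb)*e1 + qb*e2"
proof -
  obtain x1 y1 x2 y2 where
    S1: "solves_state bet sig lam mu psi M Mf N e1 x1 y1 (p * x1 + (1 - p) * x2) (p * y1 + (1 - p) * y2)" and
    S2: "solves_state bet sig lam mu psi M Mf N e2 x2 y2 ((1 - q) * x1 + q * x2) ((1 - q) * y1 + q * y2)"
    using H unfolding BRE_exists_def by blast
  define a where "a = Mf*bet"
  have l: "lam \<noteq> 0" using lam by simp
  have E1: "x1 = M*(p*x1 + (1-p)*x2) - sig*(max (psi*y1) (-mu) - N*(p*y1+(1-p)*y2)) + e1"
   and P1: "y1 = lam*x1 + a*(p*y1 + (1-p)*y2)"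
    using S1 unfolding solves_state_def Let_def a_def by (auto simp: mult.assoc)
  have E2: "x2 = M*((1-q)*x1 + q*x2) - sig*(max (psi*y2) (-mu) - N*((1-q)*y1 + q*y2)) + e2"
   and P2: "y2 = lam*x2 + a*((1-q)*y1 + q*y2)"
    using S2 unfolding solves_state_def Let_def a_def by (auto simp: mult.assoc)
  have W1: "(1-qb)*(1-p) = qb*(1-q)"
  proof -
    have "1 - qb = (1-q)/(2-p-q)" using pq by (simp add: qb_def field_simps)
    then show ?thesis by (simp add: qb_def)
  qed
  have W: "(1-qb)*(1-p) = qb*(1-q)" "(1-qb) + qb = 1" using W1 by auto
  have f1: "sig * max (psi*y1) (-mu) = ff (sig*psi) (sig*mu) y1" using sig_ff[OF sig] .
  have f2: "sig * max (psi*y2) (-mu) = ff (sig*psi) (sig*mu) y2" using sig_ff[OF sig] .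
  have D1: "be * (y1-y2) + sig*max (psi*y1) (-mu) - sig*max (psi*y2) (-mu) = e1 - e2"
    using bre_alg[OF l E1 P1 E2 P2] unfolding be_def a_def .
  have D2: "(1-qb)*(sig*max (psi*y1) (-mu) - ((M-1)*(1-a) + lam*sig*N)/lam*y1)
       + qb*(sig*max (psi*y2) (-mu) - ((M-1)*(1-a) + lam*sig*N)/lam*y2) = (1-qb)*e1 + qb*e2"
    by (rule bre_alg2[OF l W E1 P1 E2 P2])
  show ?thesis
    using D1 D2 unfolding f1 f2 ll_def delta_def a_def by (intro exI[of _ y1] exI[of _ y2]) simp
qed


lemma rpe_phi:
  fixes bet sig lam mu psi M Mf N p q e1 e2 :: real
  defines "qb \<equiv> (1-p)/(2-p-q)"
  defines "delta \<equiv> (M - 1) * (1 - Mf * bet) + lam * sig * N"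
  assumes lam: "lam > 0" and sig: "sig > 0" and a1: "Mf*bet \<noteq> 1" and mu: "mu > 0" and psi: "psi > 0"
    and g: "(1+delta)/lam > 0" "(1+delta)/lam < 1/lam + sig*psi"
    and qb: "0 \<le> qb" "qb \<le> 1"
  shows "BRRPE_exists bet sig lam mu psi M Mf N p q e1 e2 \<longleftrightarrow>
    (\<exists>t. Phi (1/lam) (sig*psi) (sig*mu) ((1+delta)/lam) (1-qb) qb e1 e2 t \<ge> 0)"
proof -
  define L where "L = 1/lam"
  define A where "A = sig*psi"
  define B where "B = sig*mu"
  define gg where "gg = (1+delta)/lam"
  have L: "L > 0" and AA: "A > 0" and BB: "B > 0" using lam sig mu psi by (auto simp: L_def A_def B_def)
  have w: "1 - qb \<ge> 0" "qb \<ge> 0" "(1-qb) + qb = 1" using qb by auto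
  have R: "BRRPE_exists bet sig lam mu psi M Mf N p q e1 e2 \<longleftrightarrow>
    (\<exists>y1 y2. hh L A B y1 - gg*((1-qb)*y1 + qb*y2) = e1 \<and>
             hh L A B y2 - gg*((1-qb)*y1 + qb*y2) = e2)"
    using rpe_y[OF lam sig a1, of mu psi M N p q e1 e2]
    unfolding L_def A_def B_def gg_def qb_def delta_def by simp
  show ?thesis
  proof
    assume "BRRPE_exists bet sig lam mu psi M Mf N p q e1 e2"
    then obtain y1 y2 where H1: "hh L A B y1 - gg*((1-qb)*y1 + qb*y2) = e1"
      and H2: "hh L A B y2 - gg*((1-qb)*y1 + qb*y2) = e2" using R by blast
    define t where "t = (1-qb)*y1 + qb*y2"
    have "e1 + gg*t = hh L A B y1" "e2 + gg*t = hh L A B y2" using H1 H2 by (auto simp: t_def)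
    then have "Phi L A B gg (1-qb) qb e1 e2 t = 0"
      unfolding Phi_def using hinv_hh[OF L AA BB] by (simp add: t_def)
    then show "\<exists>t. Phi (1/lam) (sig*psi) (sig*mu) ((1+delta)/lam) (1-qb) qb e1 e2 t \<ge> 0"
      unfolding L_def A_def B_def gg_def by (intro exI[of _ t]) simp
  next
    assume "\<exists>t. Phi (1/lam) (sig*psi) (sig*mu) ((1+delta)/lam) (1-qb) qb e1 e2 t \<ge> 0"
    then obtain t0 where "Phi L A B gg (1-qb) qb e1 e2 t0 \<ge> 0"
      unfolding L_def A_def B_def gg_def by blast
    then obtain t where t: "Phi L A B gg (1-qb) qb e1 e2 t = 0"
      using Phi_zero[OF L AA BB _ w] g unfolding gg_def L_def A_def by blast
    define y1 where "y1 = hinv L A B (e1 + gg*t)"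
    define y2 where "y2 = hinv L A B (e2 + gg*t)"
    have h1: "hh L A B y1 = e1 + gg*t" "hh L A B y2 = e2 + gg*t"
      using hh_hinv[OF L AA BB] by (auto simp: y1_def y2_def)
    have "(1-qb)*y1 + qb*y2 = t" using t unfolding Phi_def y1_def y2_def by simp
    then have "hh L A B y1 - gg*((1-qb)*y1 + qb*y2) = e1 \<and> hh L A B y2 - gg*((1-qb)*y1 + qb*y2) = e2"
      using h1 by simp
    then show "BRRPE_exists bet sig lam mu psi M Mf N p q e1 e2" using R by blast
  qed
qed


theorem proposition6:
  fixes bet sig lam mu psi M Mf N p q eps2 :: real
  assumes "0 < bet" "bet < 1" "0 < sig" "0 < lam" "0 < mu" "1 < psi"
    and "0 < M" "M \<le> 1" "0 < Mf" "Mf \<le> 1" "0 < N" "N \<le> 1"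
    and "0 < p" "p \<le> 1" "0 < q" "q \<le> 1" "(p, q) \<noteq> (1, 1)"
    and "min M (min Mf N) < 1"
    and "0 \<le> eps2"
  defines "delta \<equiv> (M - 1) * (1 - Mf * bet) + lam * sig * N"
  shows "\<exists>eRPE :: ereal. eRPE \<noteq> \<infinity> \<and>
     (\<forall>eps1. BRRPE_exists bet sig lam mu psi M Mf N p q eps1 eps2 \<longleftrightarrow> ereal eps1 \<ge> eRPE) \<and>
     (delta < 0 \<longrightarrow> eRPE = -\<infinity>) \<and>
     (\<forall>eBR :: ereal. eBR \<noteq> \<infinity> \<and>
        (\<forall>eps1. BRE_exists bet sig lam mu psi M Mf N p q eps1 eps2 \<longleftrightarrow> ereal eps1 \<ge> eBR) \<longrightarrow>
        ((delta \<ge> 0 \<and> p + q \<ge> 1) \<or> delta < 0) \<longrightarrow> eBR \<ge> eRPE)"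
proof -
  note as = assms
  define a where "a = Mf*bet"
  define qb where "qb = (1-p)/(2-p-q)"
  define L where "L = 1/lam"
  define A where "A = sig*psi"
  define B where "B = sig*mu"
  define d where "d = delta/lam"
  define g where "g = (1+delta)/lam"
  have lam: "lam > 0" and sig: "sig > 0" and mu: "mu > 0" and psi: "psi > 0" using as by auto
  have L: "L > 0" and AA: "A > 0" and BB: "B > 0" using lam sig mu psi by (auto simp: L_def A_def B_def)
  have pq: "2 - p - q > 0"
  proof -
    have "p < 1 \<or> q < 1" using as(14,16,17) by auto
    then show ?thesis using as(14,16) by auto
  qed
  have qb: "0 \<le> qb" "qb \<le> 1" using pq as(13,14,16) by (auto simp: qb_def field_simps)
  have w: "1 - qb \<ge> 0" "qb \<ge> 0" "(1-qb) + qb = 1" using qb by auto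
  have a: "0 < a" "a < 1"
  proof -
    show "0 < a" using as by (simp add: a_def)
    have "a \<le> 1*bet" unfolding a_def using as by (intro mult_right_mono) auto
    then show "a < 1" using as by simp
  qed
  have dl: "delta \<le> lam*sig*N"
  proof -
    have "(M-1)*(1-a) \<le> 0" using as a by (intro mult_nonpos_nonneg) auto
    then show ?thesis by (simp add: delta_def a_def)
  qed
  have dgt: "delta > -1"
  proof -
    have "(-1)*(1-a) \<le> (M-1)*(1-a)" using as a by (intro mult_right_mono) auto
    moreover have "lam*sig*N > 0" using as by simp
    ultimately show ?thesis using a by (simp add: delta_def a_def)
  qed
  have dA: "delta < lam*sig*psi"
  proof -
    have "lam*sig*N \<le> lam*sig*1" using as by (intro mult_left_mono) auto
    moreover have "lam*sig*1 < lam*sig*psi" using as by simp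
    ultimately show ?thesis using dl by simp
  qed
  have gpos: "g > 0" using dgt lam by (simp add: g_def)
  have gLA: "g < L + A"
  proof -
    have "(1+delta)/lam < (1 + lam*sig*psi)/lam" using dA lam by (simp add: divide_strict_right_mono)
    also have "\<dots> = L + A" using lam by (simp add: L_def A_def field_simps)
    finally show ?thesis by (simp add: g_def)
  qed
  have gLd: "g = L + d" by (simp add: g_def L_def d_def add_divide_distrib)
  have dA': "d < A"
  proof -
    have "delta < (sig*psi)*lam" using dA by (simp add: algebra_simps)
    then show ?thesis using lam by (simp add: d_def A_def pos_divide_less_eq)
  qed
  have a1: "Mf*bet \<noteq> 1" using a by (simp add: a_def)
  define P where "P = (\<lambda>e1. \<exists>t. Phi L A B g (1-qb) qb e1 eps2 t \<ge> 0)"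
  have char: "BRRPE_exists bet sig lam mu psi M Mf N p q e1 eps2 \<longleftrightarrow> P e1" for e1
    using rpe_phi[OF lam sig a1 mu psi, of M N p q e1 eps2] gpos gLA qb
    unfolding P_def L_def A_def B_def g_def qb_def delta_def by simp
  have up: "P e'" if "P e" "e \<le> e'" for e e'
    using that Phi_lip(2)[OF L AA BB gpos w, of e e' eps2] unfolding P_def by (meson order_trans)
  have P0: "P 0"
  proof -
    have "hinv L A B 0 \<ge> 0" "hinv L A B eps2 \<ge> 0" using hinv_nonneg[OF L AA BB] as(19) by auto
    then have "Phi L A B g (1-qb) qb 0 eps2 0 \<ge> 0" unfolding Phi_def using w by simp
    then show ?thesis unfolding P_def by blast
  qed
  define S where "S = {e. P e}"
  define eR where "eR = (if (\<forall>e. P e) then -\<infinity> else ereal (Inf S))"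
  have neg_all: "delta < 0 \<Longrightarrow> \<forall>e. P e"
  proof
    fix e assume "delta < 0"
    then have "g < L" using lam by (simp add: g_def L_def divide_strict_right_mono)
    then show "P e" using Phi_pos[OF L AA BB gpos w] unfolding P_def by blast
  qed
  have thr: "P e \<longleftrightarrow> ereal e \<ge> eR" for e
  proof (cases "\<forall>e. P e")
    case True then show ?thesis by (simp add: eR_def)
  next
    case False
    then obtain e0 where e0: "\<not> P e0" by blast
    have lb: "e0 \<le> s" if "s \<in> S" for s
      using that up[of s e0] e0 unfolding S_def by force
    have bdd: "bdd_below S" unfolding bdd_below_def using lb by blast
    have ne: "S \<noteq> {}" using P0 unfolding S_def by blast
    have dnn: "delta \<ge> 0" using neg_all False by force
    have LG: "L \<le> g" using gLd dnn lam by (simp add: d_def)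
    have Pr: "P (Inf S)"
    proof -
      have "\<forall>e'>Inf S. \<exists>t. Phi L A B g (1-qb) qb e' eps2 t \<ge> 0"
      proof (intro allI impI)
        fix e' assume "e' > Inf S"
        then obtain s where "s \<in> S" "s < e'" using cInf_less_iff[OF ne bdd] by blast
        then show "\<exists>t. Phi L A B g (1-qb) qb e' eps2 t \<ge> 0"
          using up[of s e'] unfolding S_def P_def by auto
      qed
      then show ?thesis using Phi_closed[OF L AA BB gpos w LG gLA] unfolding P_def by blast
    qed
    have "P e \<longleftrightarrow> e \<ge> Inf S"
    proof
      assume "P e" then show "e \<ge> Inf S" using cInf_lower[OF _ bdd] unfolding S_def by blast
    next
      assume "e \<ge> Inf S" then show "P e" using up Pr by blast
    qed
    moreover have "eR = ereal (Inf S)" using False by (simp add: eR_def)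
    ultimately show ?thesis by simp
  qed
  have part3: "eBR \<ge> eR"
    if H: "eBR \<noteq> \<infinity>" "\<forall>e1. BRE_exists bet sig lam mu psi M Mf N p q e1 eps2 \<longleftrightarrow> ereal e1 \<ge> eBR"
      and C: "(delta \<ge> 0 \<and> p + q \<ge> 1) \<or> delta < 0" for eBR
  proof (cases "delta < 0")
    case True then show ?thesis using neg_all by (simp add: eR_def)
  next
    case False
    then have dnn: "delta \<ge> 0" and pq1: "p + q \<ge> 1" using C by auto
    have incl: "P e1" if bre: "BRE_exists bet sig lam mu psi M Mf N p q e1 eps2" for e1
    proof -
      define rho where "rho = p + q - 1"
      define be where "be = ((1-Mf*bet*(p+q-1))*(1-(p+q-1)*M) - (p+q-1)*sig*N*lam)/lam"
      have rho: "0 \<le> rho" "rho \<le> 1" using pq1 as by (auto simp: rho_def)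
      obtain u1 u2 where U1: "be*(u1-u2) + ff A B u1 - ff A B u2 = e1 - eps2"
        and U2: "(1-qb) * ll A B d u1 + qb * ll A B d u2 = (1-qb)*e1 + qb*eps2"
        using bre_y[OF lam sig _ bre] pq unfolding be_def qb_def A_def B_def d_def delta_def by auto
      have ar: "0 \<le> 1 - a*rho" "1 - a*rho \<le> 1" "1 - a \<le> 1 - a*rho"
      proof -
        have "a*rho \<le> a*1" using a rho by (intro mult_left_mono) auto
        then have "a*rho \<le> a" by (simp only: mult_1_right)
        moreover have "a*rho \<ge> 0" using a rho by simp
        ultimately show "0 \<le> 1 - a*rho" "1 - a*rho \<le> 1" "1 - a \<le> 1 - a*rho" using a by linarith+
      qed
      have mr: "0 \<le> 1 - rho*M" "1 - rho*M \<le> 1" "1 - M \<le> 1 - rho*M"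
      proof -
        have "rho*M \<le> 1*M" using as rho by (intro mult_right_mono) auto
        then have "rho*M \<le> M" by (simp only: mult_1_left)
        moreover have "rho*M \<ge> 0" using as rho by simp
        ultimately show "0 \<le> 1 - rho*M" "1 - rho*M \<le> 1" "1 - M \<le> 1 - rho*M" using as(8) by linarith+
      qed
      have rsn: "rho*sig*N*lam \<ge> 0" using rho as by simp
      have prod1: "(1-a*rho)*(1-rho*M) \<le> 1*1" using mult_mono[OF ar(2) mr(2) _ mr(1)] by simp
      have m1: "0 \<le> 1 - M" using as(8) by simp
      have prod2: "(1-a)*(1-M) \<le> (1-a*rho)*(1-rho*M)" using mult_mono[OF ar(3) mr(3) ar(1) m1] .
      have rsn2: "(1-rho)*(lam*sig*N) \<ge> 0" using rho as by simp
      have beL: "be \<le> L"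
      proof -
        have "(1-a*rho)*(1-rho*M) - rho*sig*N*lam \<le> 1" using prod1 rsn by simp
        then have "((1-a*rho)*(1-rho*M) - rho*sig*N*lam)/lam \<le> 1/lam" using lam by (simp add: divide_right_mono)
        then show ?thesis by (simp add: be_def L_def a_def rho_def)
      qed
      have beD: "-d \<le> be"
      proof -
        have "-delta \<le> (1-a*rho)*(1-rho*M) - rho*sig*N*lam"
          using prod2 rsn2 unfolding delta_def a_def[symmetric] by (simp add: algebra_simps)
        then have "(-delta)/lam \<le> ((1-a*rho)*(1-rho*M) - rho*sig*N*lam)/lam" using lam by (intro divide_right_mono) auto
        then show ?thesis by (simp add: be_def d_def a_def rho_def)
      qed
      have d0: "0 \<le> d" using dnn lam by (simp add: d_def)
      obtain y1 y2 where Y1: "hh L A B y1 - hh L A B y2 = e1 - eps2"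
        and Y2: "(1-qb) * ll A B d y1 + qb * ll A B d y2 = (1-qb)*e1 + qb*eps2"
        using core_any[OF L AA BB d0 dA' beD beL w U1] U2 by auto
      have key: "(1-qb)*hh L A B y1 + qb*hh L A B y2 - g*((1-qb)*y1 + qb*y2)
                 = (1-qb) * ll A B d y1 + qb * ll A B d y2"
        unfolding gLd hh_def ll_def using w by (simp add: algebra_simps)
      define T where "T = (1-qb)*y1 + qb*y2"
      have K: "(1-qb)*hh L A B y1 + qb*hh L A B y2 - g*T = (1-qb)*e1 + qb*eps2"
        using key Y2 by (simp add: T_def)
      have "hh L A B y1 - g*T = ((1-qb)*hh L A B y1 + qb*hh L A B y2 - g*T) + qb*(hh L A B y1 - hh L A B y2)"
        by (simp add: algebra_simps)
      also have "\<dots> = e1" unfolding K Y1 by (simp add: algebra_simps)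
      finally have r1: "hh L A B y1 - g*T = e1" .
      have "hh L A B y2 - g*T = ((1-qb)*hh L A B y1 + qb*hh L A B y2 - g*T) - (1-qb)*(hh L A B y1 - hh L A B y2)"
        by (simp add: algebra_simps)
      also have "\<dots> = eps2" unfolding K Y1 by (simp add: algebra_simps)
      finally have r2: "hh L A B y2 - g*T = eps2" .
      have "hh L A B y1 - g*((1-qb)*y1 + qb*y2) = e1" "hh L A B y2 - g*((1-qb)*y1 + qb*y2) = eps2"
        using r1 r2 by (simp_all add: T_def)
      then have "BRRPE_exists bet sig lam mu psi M Mf N p q e1 eps2"
        using rpe_y[OF lam sig a1, of mu psi M N p q e1 eps2]
        unfolding L_def A_def B_def g_def qb_def delta_def by blast
      then show "P e1" using char by blast
    qed
    show ?thesis
    proof (rule ccontr)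
      assume nle: "\<not> eBR \<ge> eR"
      show False
      proof (cases eBR)
        case (real b)
        have "BRE_exists bet sig lam mu psi M Mf N p q b eps2" using H(2) real by simp
        then have "ereal b \<ge> eR" using incl thr by blast
        then show False using nle real by simp
      next
        case PInf then show False using H(1) by simp
      next
        case MInf
        then have "\<forall>e. P e" using H(2) incl by simp
        then have "eR = -\<infinity>" by (simp add: eR_def)
        then show False using nle by simp
      qed
    qed
  qed
  show ?thesis
  proof (intro exI[of _ eR] conjI allI impI)
    show "eR \<noteq> \<infinity>" by (simp add: eR_def)
  next
    fix e1 show "BRRPE_exists bet sig lam mu psi M Mf N p q e1 eps2 \<longleftrightarrow> ereal e1 \<ge> eR"
      using char thr by simp
  next
    assume "delta < 0" then show "eR = -\<infinity>" using neg_all by (simp add: eR_def)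
  next
    fix eBR :: ereal
    assume "eBR \<noteq> \<infinity> \<and> (\<forall>eps1. BRE_exists bet sig lam mu psi M Mf N p q eps1 eps2 \<longleftrightarrow> ereal eps1 \<ge> eBR)"
      and "(delta \<ge> 0 \<and> p + q \<ge> 1) \<or> delta < 0"
    then show "eBR \<ge> eR" using part3 by blast
  qed
qed


end
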